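(* There exists $\psi\in C^2(\mathbb R_+)$ with $\psi\ge0$, $\psi(0)=0$, $0<\psi'\le1$, $-2\le\psi''\le0$, $\lim_{r\to\infty}\psi(r)=+\infty$, such that $$\sup_{\varepsilon\in[0,\ell)}\int_{\mathbb R^d}\psi\big(\log(1+|x|^2)\big)\mu^\varepsilon_0(dx)<\infty.$$
   Context: Fix $d\ge1$, $\ell\in(0,1/\sqrt2)$ and $\mu_0\in\mathcal P(\mathbb R^d)$. Let $\rho^{\rm x}\in C^\infty_c(\{|x|<1\};\mathbb R_+)$ with $\int\rho^{\rm x}=1$, $\rho^{\rm x}_\varepsilon(x)=\varepsilon^{-d}\rho^{\rm x}(x/\varepsilon)$, and $\phi(x)=(2\pi)^{-d/2}e^{-|x|^2/2}$. For $\varepsilon\in(0,\ell)$ let $\mu^\varepsilon_0(dx):=\big[(1-\varepsilon)(\rho^{\rm x}_\varepsilon*\mu_0)(x)+\varepsilon\phi(x)\big]dx$, and $\mu^0_0:=\mu_0$. *)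

theory Defs
  imports "HOL-Analysis.Analysis" "HOL-Probability.Probability"
begin

coinductive smooth_fun :: "('a::euclidean_space \<Rightarrow> real) \<Rightarrow> bool" where
  "(\<forall>x. f differentiable (at x)) \<Longrightarrow>
   (\<forall>i\<in>Basis. smooth_fun (\<lambda>x. frechet_derivative f (at x) i)) \<Longrightarrow> smooth_fun f"

definition mollifier :: "('a::euclidean_space \<Rightarrow> real) \<Rightarrow> real \<Rightarrow> 'a \<Rightarrow> real" where
  "mollifier \<rho> \<epsilon> x = \<epsilon> powi (- int DIM('a)) * \<rho> ((1 / \<epsilon>) *\<^sub>R x)"

definition gauss :: "'a::euclidean_space \<Rightarrow> real" where
  "gauss x = (2 * pi) powr (- real DIM('a) / 2) * exp (- (norm x)\<^sup>2 / 2)"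

definition mu_eps :: "'a::euclidean_space measure \<Rightarrow> ('a \<Rightarrow> real) \<Rightarrow> real \<Rightarrow> 'a measure" where
  "mu_eps \<mu>0 \<rho> \<epsilon> = (if \<epsilon> = 0 then \<mu>0 else
     density lborel (\<lambda>x. ennreal ((1 - \<epsilon>) * (\<integral>y. mollifier \<rho> \<epsilon> (x - y) \<partial>\<mu>0)
                                     + \<epsilon> * gauss x)))"

end

theory Submission
  imports Defs
begin


definition psi :: "(nat \<Rightarrow> real) \<Rightarrow> real \<Rightarrow> real" where
  "psi s r = (\<Sum>k. 1 - exp (- r / s k))"
definition psi1 :: "(nat \<Rightarrow> real) \<Rightarrow> real \<Rightarrow> real" where
  "psi1 s r = (\<Sum>k. exp (- r / s k) / s k)"
definition psi2 :: "(nat \<Rightarrow> real) \<Rightarrow> real \<Rightarrow> real" where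
  "psi2 s r = (\<Sum>k. - exp (- r / s k) / (s k)^2)"

locale sq =
  fixes s :: "nat \<Rightarrow> real"
  assumes hs: "\<And>k. 2 ^ Suc k \<le> s k"
begin

lemma s_pos: "0 < s k"
  using hs[of k] by (smt (verit) zero_less_power)

lemma inv_le: "1 / s k \<le> (1/2) ^ Suc k"
proof -
  have "1 / s k \<le> 1 / 2 ^ Suc k" using hs[of k] s_pos[of k]
    by (intro divide_left_mono) auto
  thus ?thesis by (simp add: power_one_over)
qed

lemma summ_inv: "summable (\<lambda>k. 1 / s k)"
proof (rule summable_comparison_test'[where g="\<lambda>k. (1/2) ^ Suc k"])
  show "summable (\<lambda>k. (1/2::real) ^ Suc k)"
    by (subst summable_Suc_iff) (rule summable_geometric, simp)
  fix n show "norm (1 / s n) \<le> (1/2) ^ Suc n"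
  proof -
    have "0 < 1 / s n" using s_pos[of n] by simp
    thus ?thesis using inv_le[of n] by (simp only: real_norm_def abs_of_pos)
  qed
qed

lemma suminf_inv: "(\<Sum>k. 1 / s k) \<le> 1"
proof -
  have "(\<Sum>k. 1 / s k) \<le> (\<Sum>k. (1/2::real) ^ Suc k)"
    by (rule suminf_le) (use inv_le summ_inv in \<open>auto simp del: power_Suc
       intro: summable_geometric iffD2[OF summable_Suc_iff]\<close>)
  also have "\<dots> = 1" using suminf_geometric[of "1/2::real"]
    by (simp add: power_Suc suminf_mult) (subst suminf_divide, auto intro: summable_geometric)
  finally show ?thesis .
qed

lemma term_le: "0 \<le> r \<Longrightarrow> 0 \<le> 1 - exp (- r / s k) \<and> 1 - exp (- r / s k) \<le> r * (1 / s k)"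
  using exp_ge_add_one_self[of "- r / s k"] s_pos[of k] by auto

lemma summ_psi: "0 \<le> r \<Longrightarrow> summable (\<lambda>k. 1 - exp (- r / s k))"
  by (rule summable_comparison_test'[where g="\<lambda>k. r * (1 / s k)"])
     (use term_le summable_mult[OF summ_inv, of r] in auto)

lemma psi_nonneg: "0 \<le> r \<Longrightarrow> 0 \<le> psi s r"
  unfolding psi_def by (rule suminf_nonneg) (use summ_psi term_le in auto)

lemma psi_0: "psi s 0 = 0" by (simp add: psi_def)

lemma summ_psi1: "0 \<le> r \<Longrightarrow> summable (\<lambda>k. exp (- r / s k) / s k)"
  by (rule summable_comparison_test'[where g="\<lambda>k. 1 / s k"])
     (use summ_inv s_pos in \<open>auto intro!: divide_right_mono simp: less_imp_le\<close>)

lemma psi1_bounds: "0 \<le> r \<Longrightarrow> 0 < psi1 s r \<and> psi1 s r \<le> 1"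
proof -
  assume r: "0 \<le> r"
  have "0 < psi1 s r" unfolding psi1_def
    by (rule suminf_pos) (use summ_psi1[OF r] s_pos in auto)
  moreover have "psi1 s r \<le> (\<Sum>k. 1 / s k)" unfolding psi1_def
    by (rule suminf_le) (use summ_psi1[OF r] summ_inv s_pos r in \<open>auto intro!: divide_right_mono simp: less_imp_le\<close>)
  ultimately show ?thesis using suminf_inv by auto
qed

lemma bnd2: "0 \<le> r \<Longrightarrow> norm (- exp (- r / s k) / (s k)^2) \<le> 1 / s k"
proof -
  assume r: "0 \<le> r"
  have "exp (- r / s k) \<le> 1" using r s_pos[of k] by auto
  moreover have "1 \<le> s k" using hs[of k] by (smt (verit) one_le_power)
  ultimately have "exp (- r / s k) / (s k)^2 \<le> 1 / (s k)^2" "1 / (s k)^2 \<le> 1 / s k"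
    using s_pos[of k] by (auto intro!: divide_right_mono divide_left_mono simp: power2_eq_square)
  hence "exp (- r / s k) / (s k)^2 \<le> 1 / s k" by linarith
  thus ?thesis by simp
qed

lemma summ_psi2: "0 \<le> r \<Longrightarrow> summable (\<lambda>k. - exp (- r / s k) / (s k)^2)"
  by (rule summable_comparison_test'[where g="\<lambda>k. 1 / s k"]) (use summ_inv bnd2 in auto)

lemma psi2_bounds: "0 \<le> r \<Longrightarrow> -2 \<le> psi2 s r \<and> psi2 s r \<le> 0"
proof -
  assume r: "0 \<le> r"
  have "psi2 s r = - (\<Sum>k. exp (- r / s k) / (s k)^2)" unfolding psi2_def
    using summ_psi2[OF r] summable_minus[OF summ_psi2[OF r]]
    by (subst suminf_minus[symmetric]) auto
  moreover have "0 \<le> (\<Sum>k. exp (- r / s k) / (s k)^2)"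
    using summable_minus[OF summ_psi2[OF r]] by (intro suminf_nonneg) auto
  ultimately have "psi2 s r \<le> 0" by simp
  moreover have "- psi2 s r \<le> (\<Sum>k. 1 / s k)" unfolding psi2_def
    using summ_psi2[OF r] summ_inv bnd2[OF r] summable_minus[OF summ_psi2[OF r]]
    by (subst suminf_minus[symmetric]) (auto intro!: suminf_le summable_minus)
  ultimately show ?thesis using suminf_inv by auto
qed

lemma bnd1: "0 \<le> r \<Longrightarrow> norm (exp (- r / s k) / s k) \<le> 1 / s k"
  using s_pos[of k] by (auto intro!: divide_right_mono)

lemma ul1: "uniform_limit {0..} (\<lambda>n x. \<Sum>i<n. exp (- x / s i) / s i) (psi1 s) sequentially"
  unfolding psi1_def[abs_def] by (rule Weierstrass_m_test) (use bnd1 summ_inv in auto)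

lemma ul2: "uniform_limit {0..} (\<lambda>n x. \<Sum>i<n. - exp (- x / s i) / (s i)^2) (psi2 s) sequentially"
  unfolding psi2_def[abs_def] by (rule Weierstrass_m_test) (use bnd2 summ_inv in auto)

lemma dterm1: "((\<lambda>r. 1 - exp (- r / s k)) has_field_derivative exp (- x / s k) / s k) (at x within S)"
  using s_pos[of k] by (auto intro!: derivative_eq_intros simp: field_simps)

lemma dterm2: "((\<lambda>r. exp (- r / s k) / s k) has_field_derivative - exp (- x / s k) / (s k)^2) (at x within S)"
  using s_pos[of k] by (auto intro!: derivative_eq_intros simp: field_simps power2_eq_square)

lemma psi_deriv: "0 \<le> r \<Longrightarrow> (psi s has_real_derivative psi1 s r) (at r within {0..})"
proof -
  assume r: "0 \<le> r"
  obtain g where g: "\<forall>x\<in>{0..}. (\<lambda>n. 1 - exp (- x / s n)) sums g x \<and>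
      (g has_field_derivative psi1 s x) (at x within {0..})"
    using has_field_derivative_series[OF convex_real_interval(1) dterm1 ul1, of 0] by auto
  have eq: "g x = psi s x" if x: "x \<in> {0..}" for x
    unfolding psi_def using g x by (intro sums_unique) blast
  have gd: "(g has_field_derivative psi1 s r) (at r within {0..})" using g r by simp
  show ?thesis
    by (rule has_field_derivative_transform_within[OF gd zero_less_one]) (use r eq in auto)
qed

lemma psi1_deriv: "0 \<le> r \<Longrightarrow> (psi1 s has_real_derivative psi2 s r) (at r within {0..})"
proof -
  assume r: "0 \<le> r"
  obtain g where g: "\<forall>x\<in>{0..}. (\<lambda>n. exp (- x / s n) / s n) sums g x \<and>
      (g has_field_derivative psi2 s x) (at x within {0..})"
    using has_field_derivative_series[OF convex_real_interval(1) dterm2 ul2, of 0] summ_psi1[of 0] by auto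
  have eq: "g x = psi1 s x" if x: "x \<in> {0..}" for x
    unfolding psi1_def using g x by (intro sums_unique) blast
  have gd: "(g has_field_derivative psi2 s r) (at r within {0..})" using g r by simp
  show ?thesis
    by (rule has_field_derivative_transform_within[OF gd zero_less_one]) (use r eq in auto)
qed

lemma psi2_cont: "continuous_on {0..} (psi2 s)"
  by (rule uniform_limit_theorem[OF _ ul2]) (auto intro!: always_eventually continuous_intros simp: s_pos less_imp_neq[symmetric])

lemma psi_mono: "0 \<le> b \<Longrightarrow> b \<le> a \<Longrightarrow> psi s b \<le> psi s a"
proof -
  assume b: "0 \<le> b" and ab: "b \<le> a"
  have "1 - exp (- b / s n) \<le> 1 - exp (- a / s n)" for n
    using divide_right_mono[OF ab, of "s n"] s_pos[of n] by simp
  thus ?thesis unfolding psi_def using summ_psi[of a] summ_psi[of b] b ab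
    by (intro suminf_le) auto
qed

lemma psi_lip: "0 \<le> b \<Longrightarrow> b \<le> a \<Longrightarrow> psi s a \<le> psi s b + (a - b)"
proof -
  assume b: "0 \<le> b" and ab: "b \<le> a"
  have t: "(1 - exp (- a / s k)) - (1 - exp (- b / s k)) \<le> (a - b) * (1 / s k)" for k
  proof -
    have "- a / s k = - b / s k + (- (a - b) / s k)" using s_pos[of k] by (simp add: field_simps)
    hence e: "exp (- a / s k) = exp (- b / s k) * exp (- (a - b) / s k)"
      by (simp add: exp_add[symmetric])
    have "exp (- b / s k) \<le> 1" using b s_pos[of k] by auto
    moreover have "1 - (a - b) / s k \<le> exp (- (a - b) / s k)"
    proof -
      have h: "1 + (- (a - b) / s k) \<le> exp (- (a - b) / s k)" by (rule exp_ge_add_one_self)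
      have "- (a - b) / s k = - ((a - b) / s k)" by (rule minus_divide_left[symmetric])
      thus ?thesis using h by linarith
    qed
    moreover have "0 \<le> 1 - exp (- (a - b) / s k)" using ab s_pos[of k] by (auto intro: divide_nonpos_pos)
    ultimately have "exp (- b / s k) * (1 - exp (- (a - b) / s k)) \<le> 1 - exp (- (a - b) / s k)"
      by (intro mult_left_le_one_le) auto
    hence "exp (- b / s k) - exp (- a / s k) \<le> 1 - exp (- (a - b) / s k)"
      using e by (simp add: algebra_simps)
    also have "\<dots> \<le> (a - b) * (1 / s k)"
    proof -
      have h: "1 + (- (a - b) / s k) \<le> exp (- (a - b) / s k)" by (rule exp_ge_add_one_self)
      have "- (a - b) / s k = - ((a - b) / s k)" by (rule minus_divide_left[symmetric])
      thus ?thesis using h by simp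
    qed
    finally show ?thesis by simp
  qed
  have "psi s a - psi s b = (\<Sum>k. (1 - exp (- a / s k)) - (1 - exp (- b / s k)))"
    unfolding psi_def using b ab by (intro suminf_diff summ_psi) auto
  also have "\<dots> \<le> (\<Sum>k. (a - b) * (1 / s k))"
    using b ab by (intro suminf_le t summable_diff summ_psi summable_mult summ_inv) auto
  also have "\<dots> \<le> (a - b)"
    using suminf_inv ab by (subst suminf_mult[OF summ_inv]) (simp add: mult_left_le)
  finally show ?thesis by simp
qed

lemma psi_lim: "filterlim (psi s) at_top at_top"
proof (subst filterlim_at_top, intro allI)
  fix Z :: real
  define n where "n = nat \<lceil>2 * Z\<rceil>"
  have "eventually (\<lambda>r. (\<Sum>k<n. s k) \<le> r) at_top" by (rule eventually_ge_at_top)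
  thus "eventually (\<lambda>r. Z \<le> psi s r) at_top"
  proof (rule eventually_mono)
    fix r assume r: "(\<Sum>k<n. s k) \<le> r"
    have sk: "s k \<le> r" if "k < n" for k
    proof -
      have "s k \<le> (\<Sum>k<n. s k)" using that s_pos by (intro member_le_sum) (auto simp: less_imp_le)
      thus ?thesis using r by simp
    qed
    have r0: "0 \<le> r" using r s_pos by (smt (verit) sum_nonneg)
    have "1/2 \<le> 1 - exp (- r / s k)" if "k < n" for k
    proof -
      have "1 \<le> r / s k" using sk[OF that] s_pos[of k] by simp
      hence "exp (- r / s k) \<le> exp (-1)" by simp
      moreover have "exp (-1::real) \<le> 1/2"
        using exp_ge_add_one_self[of 1] by (simp add: exp_minus field_simps)
      ultimately show ?thesis by linarith
    qed
    hence "(\<Sum>k<n. 1/2) \<le> (\<Sum>k<n. 1 - exp (- r / s k))" by (intro sum_mono) auto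
    also have "\<dots> \<le> psi s r" unfolding psi_def
      using r0 term_le by (intro sum_le_suminf summ_psi) auto
    finally have "real n / 2 \<le> psi s r" by simp
    moreover have "Z \<le> real n / 2" unfolding n_def by linarith
    ultimately show "Z \<le> psi s r" by simp
  qed
qed

end


lemma tail_small:
  fixes M :: "'b measure" and h :: "'b \<Rightarrow> real"
  assumes fin: "emeasure M (space M) < \<infinity>" and hm[measurable]: "h \<in> borel_measurable M"
    and h0: "\<And>x. 0 \<le> h x" and e: "0 < e"
  shows "\<exists>N>0. \<forall>s\<ge>N. (\<integral>\<^sup>+x. ennreal (1 - exp (- h x / s)) \<partial>M) < e"
proof -
  define f where "f i x = ennreal (1 - exp (- h x / real (Suc i)))" for i x
  have fm[measurable]: "f i \<in> borel_measurable M" for i unfolding f_def by measurable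
  have mono: "1 - exp (- h x / t) \<le> 1 - exp (- h x / u)" if "0 < u" "u \<le> t" for x t u
  proof -
    have "h x / t \<le> h x / u" using that h0[of x] by (intro divide_left_mono) auto
    thus ?thesis by simp
  qed
  have dec: "decseq f"
  proof (intro decseq_SucI le_funI)
    fix n x show "f (Suc n) x \<le> f n x" unfolding f_def by (intro ennreal_leI mono) auto
  qed
  have fin_i: "(\<integral>\<^sup>+ x. f i x \<partial>M) < \<infinity>" for i
  proof -
    have "(\<integral>\<^sup>+ x. f i x \<partial>M) \<le> (\<integral>\<^sup>+ x. 1 \<partial>M)" unfolding f_def
      by (intro nn_integral_mono) auto
    also have "\<dots> = emeasure M (space M)" by simp
    finally show ?thesis using fin by (simp add: top.not_eq_extremum le_less_trans)
  qed
  have inf0: "(INF i. f i x) = 0" for x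
  proof -
    have "(\<lambda>i. h x / real (Suc i)) \<longlonglongrightarrow> 0"
      by (intro tendsto_divide_0[OF tendsto_const] filterlim_at_top_imp_at_infinity
          filterlim_compose[OF filterlim_real_sequentially filterlim_Suc])
    hence "(\<lambda>i. 1 - exp (- (h x / real (Suc i)))) \<longlonglongrightarrow> 1 - exp (- 0)"
      by (intro tendsto_intros)
    hence "(\<lambda>i. f i x) \<longlonglongrightarrow> ennreal 0" unfolding f_def by (intro tendsto_ennrealI) simp
    moreover have "(\<lambda>i. f i x) \<longlonglongrightarrow> (INF i. f i x)"
      by (intro LIMSEQ_INF decseq_SucI le_funD[OF decseq_SucD[OF dec]])
    ultimately show ?thesis using LIMSEQ_unique by fastforce
  qed
  have "(INF i. integral\<^sup>N M (f i)) = (\<integral>\<^sup>+ x. (INF i. f i x) \<partial>M)"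
    by (rule nn_integral_monotone_convergence_INF_decseq[symmetric, OF dec fm fin_i])
  also have "\<dots> = 0" by (simp add: inf0)
  finally have "(INF i. integral\<^sup>N M (f i)) < e" using e by simp
  then obtain i where i: "integral\<^sup>N M (f i) < e" by (auto simp: INF_less_iff)
  show ?thesis
  proof (intro exI[of _ "real (Suc i)"] conjI allI impI)
    fix s :: real assume s: "real (Suc i) \<le> s"
    have "(\<integral>\<^sup>+x. ennreal (1 - exp (- h x / s)) \<partial>M) \<le> integral\<^sup>N M (f i)"
      unfolding f_def using s by (intro nn_integral_mono ennreal_leI mono) auto
    thus "(\<integral>\<^sup>+x. ennreal (1 - exp (- h x / s)) \<partial>M) < e" using i by simp
  qed simp
qed

lemma norm_sq_sum: "(norm (x::'a::euclidean_space))\<^sup>2 = (\<Sum>b\<in>Basis. (x \<bullet> b)\<^sup>2)"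
  unfolding power2_norm_eq_inner by (subst euclidean_inner) (simp add: power2_eq_square)

lemma gauss_fin: "(\<integral>\<^sup>+x. ennreal (gauss (x::'a::euclidean_space)) \<partial>lborel) < \<infinity>"
proof -
  define C :: real where "C = (2 * pi) powr (- real DIM('a) / 2)"
  have C0: "0 \<le> C" unfolding C_def by simp
  have g: "gauss x = C * (\<Prod>b\<in>Basis. exp (- (x \<bullet> b)\<^sup>2 / 2))" for x :: 'a
    unfolding gauss_def C_def norm_sq_sum
    by (simp add: exp_sum[symmetric] sum_divide_distrib[symmetric] sum_negf)
  obtain c where c: "(\<integral>\<^sup>+t. ennreal (exp (- t\<^sup>2 / 2)) \<partial>lborel) = ennreal c" and c0: "0 \<le> c"
  proof -
    have int: "integrable lborel (\<lambda>x. std_normal_density x)"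
      using integrable_std_normal_moment[of 0] by simp
    have "(\<integral>\<^sup>+t. ennreal (exp (- t\<^sup>2 / 2)) \<partial>lborel) =
          (\<integral>\<^sup>+t. ennreal (sqrt (2 * pi)) * ennreal (std_normal_density t) \<partial>lborel)"
      by (intro nn_integral_cong) (simp add: std_normal_density_def ennreal_mult[symmetric])
    also have "\<dots> = ennreal (sqrt (2 * pi)) * (\<integral>\<^sup>+t. ennreal (std_normal_density t) \<partial>lborel)"
      by (rule nn_integral_cmult) simp
    also have "\<dots> = ennreal (sqrt (2 * pi)) * ennreal (integral\<^sup>L lborel std_normal_density)"
      using int by (subst nn_integral_eq_integral) auto
    moreover have i0: "0 \<le> integral\<^sup>L lborel std_normal_density" by (intro integral_nonneg_AE AE_I2) simp
    ultimately show ?thesis using that[of "sqrt (2 * pi) * integral\<^sup>L lborel std_normal_density"]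
      by (simp add: ennreal_mult[symmetric])
  qed
  have "(\<integral>\<^sup>+x. ennreal (gauss (x::'a)) \<partial>lborel) =
        (\<integral>\<^sup>+x. ennreal C * (\<Prod>b\<in>Basis. ennreal (exp (- (x \<bullet> b)\<^sup>2 / 2))) \<partial>(lborel :: 'a measure))"
  proof (intro nn_integral_cong)
    fix x :: 'a
    show "ennreal (gauss x) = ennreal C * (\<Prod>b\<in>Basis. ennreal (exp (- (x \<bullet> b)\<^sup>2 / 2)))"
      unfolding g[of x] using C0 by (simp add: ennreal_mult prod_ennreal prod_nonneg)
  qed
  also have "\<dots> = ennreal C * (\<integral>\<^sup>+x. (\<Prod>b\<in>Basis. ennreal (exp (- (x \<bullet> b)\<^sup>2 / 2))) \<partial>(lborel :: 'a measure))"
    by (rule nn_integral_cmult) measurable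
  also have "(\<integral>\<^sup>+x. (\<Prod>b\<in>Basis. ennreal (exp (- (x \<bullet> b)\<^sup>2 / 2))) \<partial>(lborel :: 'a measure))
      = (\<Prod>b\<in>(Basis::'a set). (\<integral>\<^sup>+t. ennreal (exp (- t\<^sup>2 / 2)) \<partial>lborel))"
    by (rule nn_integral_lborel_prod[where f="\<lambda>b t. ennreal (exp (- t\<^sup>2 / 2))"]) auto
  also have "\<dots> = ennreal (c ^ DIM('a))" using c c0
    by (simp add: prod_ennreal[symmetric] ennreal_power)
  finally show ?thesis by (simp add: ennreal_mult[symmetric] C0 c0 ennreal_mult_less_top)
qed



lemma ennreal_integral_le:
  assumes "\<And>x. 0 \<le> f x"
  shows "ennreal (integral\<^sup>L M f) \<le> (\<integral>\<^sup>+x. ennreal (f x) \<partial>M)"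
proof (cases "integrable M f")
  case True thus ?thesis using assms by (subst nn_integral_eq_integral) auto
next
  case False thus ?thesis by (simp add: not_integrable_integral_eq)
qed

lemma h_shift:
  fixes x y :: "'a::euclidean_space"
  assumes "norm (x - y) \<le> 1"
  shows "ln (1 + (norm x)\<^sup>2) \<le> ln (1 + (norm y)\<^sup>2) + 2"
proof -
  have "norm x \<le> norm y + 1" using assms norm_triangle_sub[of x y] by linarith
  hence "(norm x)\<^sup>2 \<le> (norm y + 1)\<^sup>2" by (intro power_mono) auto
  also have "\<dots> \<le> 2 * (norm y)\<^sup>2 + 2"
  proof -
    have "0 \<le> (norm y - 1)\<^sup>2" by simp
    thus ?thesis unfolding power2_diff power2_sum by simp
  qed
  finally have "(norm x)\<^sup>2 \<le> 2 * (norm y)\<^sup>2 + 2" .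
  hence "1 + (norm x)\<^sup>2 \<le> 3 * (1 + (norm y)\<^sup>2)" using zero_le_power2[of "norm y"] unfolding distrib_left by linarith
  moreover have "0 < 1 + (norm x)\<^sup>2" by (metis add_pos_nonneg zero_less_one zero_le_power2)
  ultimately have "ln (1 + (norm x)\<^sup>2) \<le> ln (3 * (1 + (norm y)\<^sup>2))" by (intro ln_mono) auto
  also have "\<dots> = ln 3 + ln (1 + (norm y)\<^sup>2)" by (intro ln_mult_pos) (auto intro: add_pos_nonneg)
  also have "ln (3::real) \<le> 2" using ln_le_minus_one[of 3] by simp
  finally show ?thesis by simp
qed

context sq begin

lemma psi_shift:
  fixes x y :: "'a::euclidean_space"
  assumes "norm (x - y) \<le> 1"
  shows "psi s (ln (1 + (norm x)\<^sup>2)) \<le> psi s (ln (1 + (norm y)\<^sup>2)) + 2"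
proof -
  let ?a = "ln (1 + (norm x)\<^sup>2)" and ?b = "ln (1 + (norm y)\<^sup>2)"
  have a0: "0 \<le> ?a" and b0: "0 \<le> ?b" by auto
  show ?thesis
  proof (cases "?a \<le> ?b")
    case True thus ?thesis using psi_mono[OF a0 True] by simp
  next
    case False
    hence "psi s ?a \<le> psi s ?b + (?a - ?b)" using psi_lip[OF b0] by simp
    thus ?thesis using h_shift[OF assms] by simp
  qed
qed

lemma psi_meas:
  assumes [measurable]: "h \<in> borel_measurable M" and h0: "\<And>x. 0 \<le> h x"
  shows "(\<lambda>x. psi s (h x)) \<in> borel_measurable M"
proof (rule borel_measurable_LIMSEQ_real[where u="\<lambda>n x. \<Sum>k<n. 1 - exp (- h x / s k)"])
  fix x show "(\<lambda>n. \<Sum>k<n. 1 - exp (- h x / s k)) \<longlonglongrightarrow> psi s (h x)"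
    unfolding psi_def by (rule summable_LIMSEQ[OF summ_psi[OF h0]])
qed measurable

lemma int_bound:
  assumes [measurable]: "h \<in> borel_measurable M" and h0: "\<And>x. 0 \<le> h x"
    and small: "\<And>k. (\<integral>\<^sup>+x. ennreal (1 - exp (- h x / s k)) \<partial>M) < ennreal ((1/2)^k)"
  shows "(\<integral>\<^sup>+x. ennreal (psi s (h x)) \<partial>M) \<le> 2"
proof -
  have "(\<integral>\<^sup>+x. ennreal (psi s (h x)) \<partial>M) = (\<integral>\<^sup>+x. (\<Sum>k. ennreal (1 - exp (- h x / s k))) \<partial>M)"
    unfolding psi_def using summ_psi[OF h0] term_le[OF h0]
    by (intro nn_integral_cong) (simp add: suminf_ennreal2)
  also have "\<dots> = (\<Sum>k. \<integral>\<^sup>+x. ennreal (1 - exp (- h x / s k)) \<partial>M)"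
    by (rule nn_integral_suminf) measurable
  also have "\<dots> \<le> (\<Sum>k. ennreal ((1/2)^k))"
    by (intro suminf_le less_imp_le small) auto
  also have "\<dots> = ennreal (\<Sum>k. (1/2)^k)"
    by (intro suminf_ennreal2) (auto intro: summable_geometric)
  also have "\<dots> = 2" using suminf_geometric[of "1/2::real"] by simp
  finally show ?thesis .
qed

end

lemma molli_int:
  fixes \<rho> :: "'a::euclidean_space \<Rightarrow> real"
  assumes e: "0 < e" and cont: "continuous_on UNIV \<rho>" and nn: "\<And>x. 0 \<le> \<rho> x"
    and int1: "(\<integral>x. \<rho> x \<partial>lborel) = 1"
  shows "(\<integral>\<^sup>+x. ennreal (mollifier \<rho> e (x - y)) \<partial>lborel) = 1"
proof -
  have rm[measurable]: "\<rho> \<in> borel_measurable borel" by (rule borel_measurable_continuous_onI[OF cont])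
  have int: "integrable lborel \<rho>" using int1 not_integrable_integral_eq by fastforce
  have eq: "lborel = density (distr lborel borel (\<lambda>x. y + e *\<^sub>R x)) (\<lambda>_. \<bar>e\<bar>^DIM('a))"
    by (rule lborel_affine) (use e in simp)
  have "(\<integral>\<^sup>+x. ennreal (mollifier \<rho> e (x - y)) \<partial>lborel) =
        (\<integral>\<^sup>+x. ennreal (mollifier \<rho> e (x - y)) \<partial>density (distr lborel borel (\<lambda>x. y + e *\<^sub>R x)) (\<lambda>_. \<bar>e\<bar>^DIM('a)))"
    using arg_cong[where f="\<lambda>M. \<integral>\<^sup>+x. ennreal (mollifier \<rho> e (x - y)) \<partial>M", OF eq] .
  also have "\<dots> = (\<integral>\<^sup>+x. ennreal (\<bar>e\<bar>^DIM('a)) * ennreal (mollifier \<rho> e (y + e *\<^sub>R x - y)) \<partial>lborel)"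
    unfolding mollifier_def by (subst nn_integral_density) (auto simp: nn_integral_distr)
  also have "\<dots> = (\<integral>\<^sup>+x. ennreal (\<rho> x) \<partial>lborel)"
  proof (intro nn_integral_cong)
    fix x :: 'a
    have "\<bar>e\<bar>^DIM('a) * mollifier \<rho> e (y + e *\<^sub>R x - y) = \<rho> x"
      using e unfolding mollifier_def by (simp add: power_int_minus field_simps)
    moreover have "ennreal (\<bar>e\<bar>^DIM('a)) * ennreal (mollifier \<rho> e (y + e *\<^sub>R x - y))
       = ennreal (\<bar>e\<bar>^DIM('a) * mollifier \<rho> e (y + e *\<^sub>R x - y))"
      by (rule ennreal_mult'[symmetric]) simp
    ultimately show "ennreal (\<bar>e\<bar>^DIM('a)) * ennreal (mollifier \<rho> e (y + e *\<^sub>R x - y)) = ennreal (\<rho> x)"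
      by simp
  qed
  also have "\<dots> = 1" using int nn int1 by (subst nn_integral_eq_integral) auto
  finally show ?thesis .
qed



theorem lemma3p4:
  fixes \<mu>0 :: "'a::euclidean_space measure" and \<rho> :: "'a \<Rightarrow> real" and l :: real
  assumes "0 < l" and "l < 1 / sqrt 2"
    and "prob_space \<mu>0" and "sets \<mu>0 = sets borel"
    and "smooth_fun \<rho>"
    and "\<exists>K. compact K \<and> K \<subseteq> ball 0 1 \<and> (\<forall>x. x \<notin> K \<longrightarrow> \<rho> x = 0)"
    and "\<forall>x. 0 \<le> \<rho> x"
    and "(\<integral>x. \<rho> x \<partial>lborel) = 1"
  shows "\<exists>\<psi> \<psi>' \<psi>'' :: real \<Rightarrow> real.
           (\<forall>r\<ge>0. (\<psi> has_real_derivative \<psi>' r) (at r within {0..})) \<and>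
           (\<forall>r\<ge>0. (\<psi>' has_real_derivative \<psi>'' r) (at r within {0..})) \<and>
           continuous_on {0..} \<psi>'' \<and>
           (\<forall>r\<ge>0. 0 \<le> \<psi> r) \<and> \<psi> 0 = 0 \<and>
           (\<forall>r\<ge>0. 0 < \<psi>' r \<and> \<psi>' r \<le> 1) \<and>
           (\<forall>r\<ge>0. -2 \<le> \<psi>'' r \<and> \<psi>'' r \<le> 0) \<and>
           filterlim \<psi> at_top at_top \<and>
           (SUP \<epsilon>\<in>{0..<l}. \<integral>\<^sup>+ x. ennreal (\<psi> (ln (1 + (norm x)\<^sup>2))) \<partial>(mu_eps \<mu>0 \<rho> \<epsilon>)) < \<infinity>"
proof -
  note l0 = assms(1) and l1 = assms(2) and prob = assms(3) and sets0 = assms(4)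
  obtain K where K: "compact K" "K \<subseteq> ball 0 1" "\<And>x. x \<notin> K \<Longrightarrow> \<rho> x = 0" using assms(6) by blast
  have \<rho>0: "\<And>x. 0 \<le> \<rho> x" using assms(7) by blast
  have \<rho>int: "(\<integral>x. \<rho> x \<partial>lborel) = 1" by (rule assms(8))
  have \<rho>cont: "continuous_on UNIV \<rho>"
  proof -
    have "\<forall>x. \<rho> differentiable (at x)" using assms(5) by (cases rule: smooth_fun.cases) auto
    thus ?thesis by (intro continuous_at_imp_continuous_on ballI differentiable_imp_continuous_within) auto
  qed
  have sq2: "1 < sqrt (2::real)" by simp
  have l_lt1: "l < 1"
  proof -
    have "1 / sqrt 2 < (1::real)" using sq2 by simp
    thus ?thesis using l1 by linarith
  qed
  have sf0: "sigma_finite_measure \<mu>0" by (rule prob_space_imp_sigma_finite[OF prob])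
  interpret P0: prob_space \<mu>0 by (rule prob)
  interpret pp: pair_sigma_finite lborel \<mu>0
    by (intro pair_sigma_finite.intro sigma_finite_lborel sf0)
  define h where "h x = ln (1 + (norm x)\<^sup>2)" for x :: 'a
  have h0: "\<And>x. 0 \<le> h x" unfolding h_def by simp
  have hmb: "h \<in> borel_measurable borel" unfolding h_def by measurable
  have meq: "\<And>N. measurable \<mu>0 N = measurable borel N" by (rule measurable_cong_sets[OF sets0 refl])
  have hm0: "h \<in> borel_measurable \<mu>0" using hmb by (simp only: meq)
  have hml: "h \<in> borel_measurable lborel" using hmb by simp
  define G where "G = density lborel (\<lambda>x::'a. ennreal (gauss x))"
  have gm: "(\<lambda>x::'a. ennreal (gauss x)) \<in> borel_measurable borel" unfolding gauss_def by measurable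
  have gmr: "(gauss :: 'a \<Rightarrow> real) \<in> borel_measurable borel" unfolding gauss_def by measurable
  have Gfin: "emeasure G (space G) < \<infinity>"
    unfolding G_def using gauss_fin gm by (simp add: emeasure_density)
  have hmG: "h \<in> borel_measurable G" unfolding G_def using hml by simp
  have mufin: "emeasure \<mu>0 (space \<mu>0) < \<infinity>" by (simp add: P0.emeasure_space_1)
  have "\<forall>k. \<exists>N>0. \<forall>s\<ge>N. (\<integral>\<^sup>+x. ennreal (1 - exp (- h x / s)) \<partial>\<mu>0) < ennreal ((1/2)^k)"
    using tail_small[OF mufin hm0 h0] by simp
  then obtain N1 where N1: "\<And>k s. s \<ge> N1 k \<Longrightarrow> (\<integral>\<^sup>+x. ennreal (1 - exp (- h x / s)) \<partial>\<mu>0) < ennreal ((1/2)^k)"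
    by metis
  have "\<forall>k. \<exists>N>0. \<forall>s\<ge>N. (\<integral>\<^sup>+x. ennreal (1 - exp (- h x / s)) \<partial>G) < ennreal ((1/2)^k)"
    using tail_small[OF Gfin hmG h0] by simp
  then obtain N2 where N2: "\<And>k s. s \<ge> N2 k \<Longrightarrow> (\<integral>\<^sup>+x. ennreal (1 - exp (- h x / s)) \<partial>G) < ennreal ((1/2)^k)"
    by metis
  define s where "s k = max (2 ^ Suc k) (max (N1 k) (N2 k))" for k
  interpret S: sq s by unfold_locales (simp add: s_def)
  have B0: "(\<integral>\<^sup>+x. ennreal (psi s (h x)) \<partial>\<mu>0) \<le> 2"
    by (rule S.int_bound[OF hm0 h0]) (intro N1, simp add: s_def)
  have BG: "(\<integral>\<^sup>+x. ennreal (psi s (h x)) \<partial>G) \<le> 2"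
    by (rule S.int_bound[OF hmG h0]) (intro N2, simp add: s_def)
  define P where "P x = ennreal (psi s (h x))" for x
  have Pm: "P \<in> borel_measurable borel" unfolding P_def using S.psi_meas[OF hmb h0] by simp
  have BG': "(\<integral>\<^sup>+x. ennreal (gauss x) * P x \<partial>lborel) \<le> 2"
    using BG gm Pm unfolding G_def P_def by (simp add: nn_integral_density)
  have main: "(\<integral>\<^sup>+x. P x \<partial>mu_eps \<mu>0 \<rho> e) \<le> 6" if e: "e \<in> {0..<l}" for e
  proof (cases "e = 0")
    case True
    have "(2::ennreal) \<le> 6" by simp
    from order_trans[OF B0 this] show ?thesis using True unfolding mu_eps_def P_def by simp
  next
    case False
    hence e0: "0 < e" and e1: "e < 1" using e l_lt1 by auto
    define m where "m = mollifier \<rho> e"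
    have m0: "0 \<le> m z" for z unfolding m_def mollifier_def using e0 \<rho>0 by simp
    have mc: "continuous_on UNIV m" unfolding m_def mollifier_def
      by (intro continuous_intros continuous_on_compose2[OF \<rho>cont]) auto
    have mb[measurable]: "m \<in> borel_measurable borel" by (rule borel_measurable_continuous_onI[OF mc])
    have mcont: "continuous_on UNIV (\<lambda>p::'a \<times> 'a. m (fst p - snd p))"
      unfolding m_def mollifier_def
      by (intro continuous_intros continuous_on_compose2[OF \<rho>cont]) auto
    have "sets (lborel \<Otimes>\<^sub>M \<mu>0) = sets ((borel::'a measure) \<Otimes>\<^sub>M (borel::'a measure))"
      by (rule sets_pair_measure_cong) (simp_all add: sets0)
    also have "((borel::'a measure) \<Otimes>\<^sub>M (borel::'a measure)) = borel" by (rule borel_prod)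
    finally have sets_pair: "sets (lborel \<Otimes>\<^sub>M \<mu>0) = sets (borel :: ('a \<times> 'a) measure)" .
    have mm: "(\<lambda>p::'a \<times> 'a. m (fst p - snd p)) \<in> borel_measurable (lborel \<Otimes>\<^sub>M \<mu>0)"
    proof -
      have pe: "borel_measurable (lborel \<Otimes>\<^sub>M \<mu>0) = borel_measurable (borel::('a \<times> 'a) measure)"
        by (rule measurable_cong_sets[OF sets_pair refl])
      show ?thesis using borel_measurable_continuous_onI[OF mcont] by (simp only: pe)
    qed
    define I where "I x = (\<integral>y. m (x - y) \<partial>\<mu>0)" for x
    have Im: "I \<in> borel_measurable lborel" unfolding I_def
      by (rule sigma_finite_measure.borel_measurable_lebesgue_integral[OF sf0]) (use mm in simp)
    have I0: "0 \<le> I x" for x unfolding I_def by (intro integral_nonneg_AE AE_I2 m0)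
    have Ile: "ennreal (I x) \<le> (\<integral>\<^sup>+y. ennreal (m (x - y)) \<partial>\<mu>0)" for x
      unfolding I_def by (rule ennreal_integral_le[OF m0])
    define D where "D x = ennreal ((1 - e) * I x + e * gauss x)" for x
    have Dm: "D \<in> borel_measurable lborel" unfolding D_def using Im gmr by measurable
    have Pml: "P \<in> borel_measurable lborel" using Pm by simp
    have g0: "0 \<le> gauss x" for x :: 'a unfolding gauss_def by simp
    have Dle: "D x \<le> ennreal (I x) + ennreal (gauss x)" for x
    proof -
      have "(1 - e) * I x \<le> I x" using e0 e1 I0[of x] by (intro mult_left_le_one_le) auto
      moreover have "e * gauss x \<le> gauss x" using e0 e1 g0[of x] by (intro mult_left_le_one_le) auto
      ultimately have "(1 - e) * I x + e * gauss x \<le> I x + gauss x" by linarith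
      hence "D x \<le> ennreal (I x + gauss x)" unfolding D_def by (rule ennreal_leI)
      also have "\<dots> = ennreal (I x) + ennreal (gauss x)" using I0[of x] g0[of x] by (rule ennreal_plus)
      finally show ?thesis .
    qed
    have inner: "(\<integral>\<^sup>+x. ennreal (m (x - y)) * P x \<partial>lborel) \<le> P y + 2" for y
    proof -
      have "(\<integral>\<^sup>+x. ennreal (m (x - y)) * P x \<partial>lborel) \<le> (\<integral>\<^sup>+x. ennreal (m (x - y)) * (P y + 2) \<partial>lborel)"
      proof (intro nn_integral_mono)
        fix x
        show "ennreal (m (x - y)) * P x \<le> ennreal (m (x - y)) * (P y + 2)"
        proof (cases "m (x - y) = 0")
          case True thus ?thesis by simp
        next
          case False
          hence "\<rho> ((1 / e) *\<^sub>R (x - y)) \<noteq> 0" unfolding m_def mollifier_def by auto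
          hence "(1 / e) *\<^sub>R (x - y) \<in> K" using K(3) by blast
          hence "norm ((1 / e) *\<^sub>R (x - y)) < 1" using K(2) by auto
          moreover have "norm ((1 / e) *\<^sub>R (x - y)) = norm (x - y) / e" using e0 by simp
          ultimately have "norm (x - y) / e < 1" by linarith
          hence "norm (x - y) < e" using e0 by (simp add: pos_divide_less_eq)
          hence "psi s (h x) \<le> psi s (h y) + 2" unfolding h_def using e1 by (intro S.psi_shift) simp
          hence "ennreal (psi s (h x)) \<le> ennreal (psi s (h y) + 2)" by (rule ennreal_leI)
          also have "\<dots> = ennreal (psi s (h y)) + ennreal 2" using S.psi_nonneg[OF h0] by (intro ennreal_plus) auto
          finally have "P x \<le> P y + 2" unfolding P_def by simp
          thus ?thesis by (intro mult_left_mono) auto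
        qed
      qed
      also have "\<dots> = (\<integral>\<^sup>+x. ennreal (m (x - y)) \<partial>lborel) * (P y + 2)"
        by (rule nn_integral_multc) measurable
      also have "\<dots> = (P y + 2) * (\<integral>\<^sup>+x. ennreal (m (x - y)) \<partial>lborel)" by (rule mult.commute)
      also have "(\<integral>\<^sup>+x. ennreal (m (x - y)) \<partial>lborel) = 1"
        unfolding m_def by (rule molli_int[OF e0 \<rho>cont \<rho>0 \<rho>int])
      finally show ?thesis by simp
    qed
    have T1: "(\<integral>\<^sup>+x. ennreal (I x) * P x \<partial>lborel) \<le> (\<integral>\<^sup>+y. P y \<partial>\<mu>0) + 2"
    proof -
      have "(\<integral>\<^sup>+x. ennreal (I x) * P x \<partial>lborel) \<le> (\<integral>\<^sup>+x. (\<integral>\<^sup>+y. ennreal (m (x - y)) \<partial>\<mu>0) * P x \<partial>lborel)"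
        by (intro nn_integral_mono mult_right_mono Ile) auto
      also have "\<dots> = (\<integral>\<^sup>+x. (\<integral>\<^sup>+y. ennreal (m (x - y)) * P x \<partial>\<mu>0) \<partial>lborel)"
        by (intro nn_integral_cong nn_integral_multc[symmetric]) (subst meq, measurable)
      also have "\<dots> = (\<integral>\<^sup>+y. (\<integral>\<^sup>+x. ennreal (m (x - y)) * P x \<partial>lborel) \<partial>\<mu>0)"
        by (rule pp.Fubini'[symmetric]) (use mm Pml in simp)
      also have "\<dots> \<le> (\<integral>\<^sup>+y. P y + 2 \<partial>\<mu>0)"
        by (intro nn_integral_mono inner)
      also have "\<dots> = (\<integral>\<^sup>+y. P y \<partial>\<mu>0) + 2"
        using Pm meq by (subst nn_integral_add) (auto simp: P0.emeasure_space_1)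
      finally show ?thesis .
    qed
    have "(\<integral>\<^sup>+x. P x \<partial>mu_eps \<mu>0 \<rho> e) = (\<integral>\<^sup>+x. D x * P x \<partial>lborel)"
    proof -
      have "mu_eps \<mu>0 \<rho> e = density lborel D"
        unfolding mu_eps_def D_def I_def m_def using False by simp
      thus ?thesis using nn_integral_density[OF Dm Pml] by simp
    qed
    also have "\<dots> \<le> (\<integral>\<^sup>+x. ennreal (I x) * P x + ennreal (gauss x) * P x \<partial>lborel)"
    proof (intro nn_integral_mono)
      fix x show "D x * P x \<le> ennreal (I x) * P x + ennreal (gauss x) * P x"
        using mult_right_mono[OF Dle[of x], of "P x"] by (simp add: distrib_right)
    qed
    also have "\<dots> = (\<integral>\<^sup>+x. ennreal (I x) * P x \<partial>lborel) + (\<integral>\<^sup>+x. ennreal (gauss x) * P x \<partial>lborel)"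
      using Im gm Pml by (intro nn_integral_add) auto
    also have "\<dots> \<le> ((\<integral>\<^sup>+y. P y \<partial>\<mu>0) + 2) + 2"
      by (intro add_mono T1 BG')
    also have "\<dots> \<le> (2 + 2) + 2" using B0 unfolding P_def by (intro add_right_mono) auto
    finally show ?thesis by simp
  qed
  have sup: "(SUP e\<in>{0..<l}. \<integral>\<^sup>+ x. ennreal (psi s (ln (1 + (norm x)\<^sup>2))) \<partial>(mu_eps \<mu>0 \<rho> e)) < \<infinity>"
  proof -
    have "(SUP e\<in>{0..<l}. \<integral>\<^sup>+ x. ennreal (psi s (ln (1 + (norm x)\<^sup>2))) \<partial>(mu_eps \<mu>0 \<rho> e)) \<le> 6"
      using main unfolding P_def h_def by (intro SUP_least) auto
    thus ?thesis by (simp add: le_less_trans)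
  qed
  show ?thesis
    apply (rule exI[of _ "psi s"], rule exI[of _ "psi1 s"], rule exI[of _ "psi2 s"])
    apply (intro conjI allI impI)
    using S.psi_deriv S.psi1_deriv S.psi2_cont S.psi_nonneg S.psi_0 S.psi1_bounds S.psi2_bounds
      S.psi_lim sup by auto
qed

end
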